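(* Let $X$ be a nonempty compact metric space and $Y\subseteq X$ a dense subset, endowed with the induced metric. Then $d^{us}_{GH}(X,Y)=0$.
   Context: For a metric space, $|xy|$ denotes distance. A set-valued map $f:X\rightrightarrows Y$ assigns to each $x\in X$ a nonempty $f(x)\subseteq Y$ and is identified with its graph. A correspondence between $X$ and $Y$ is a subset $R\subseteq X\times Y$ whose projections to $X$ and to $Y$ are both surjective, regarded as the set-valued map $x\mapsto R(x)=\{y:(x,y)\in R\}$; $R^{-1}=\{(y,x):(x,y)\in R\}$; $\mathcal R(X,Y)$ is the set of all correspondences. The distortion of a nonempty $\sigma\subseteq X\times Y$ is $\operatorname{dis}\sigma=\sup\{||xx'|-|yy'||:(x,y),(x',y')\in\sigma\}\in[0,\infty]$. A set-valued map $f$ is upper semicontinuous if for every $x$ and every open $U\supseteq f(x)$ there is a neighborhood $V$ of $x$ with $f(x')\subseteq U$ for all $x'\in V$. $\mathcal R_{us}(X,Y)$ is the set of $R\in\mathcal R(X,Y)$ with both $R$ and $R^{-1}$ upper semicontinuous, and $d^{us}_{GH}(X,Y)=\frac12\inf\{\operatorname{dis}R:R\in\mathcal R_{us}(X,Y)\}$. *)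

theory Defs
  imports "HOL-Analysis.Analysis"
begin

definition correspondence :: "'a set \<Rightarrow> 'b set \<Rightarrow> ('a \<times> 'b) set \<Rightarrow> bool" where
  "correspondence X Y R \<longleftrightarrow> R \<subseteq> X \<times> Y \<and> fst ` R = X \<and> snd ` R = Y"

definition dis :: "('a::metric_space \<times> 'b::metric_space) set \<Rightarrow> ereal" where
  "dis R = (SUP p\<in>R. SUP q\<in>R.
      ereal \<bar>dist (fst p) (fst q) - dist (snd p) (snd q)\<bar>)"

definition usc :: "'a::metric_space set \<Rightarrow> 'b::metric_space set \<Rightarrow> ('a \<times> 'b) set \<Rightarrow> bool" where
  "usc X Y R \<longleftrightarrow> (\<forall>x\<in>X. \<forall>U. openin (top_of_set Y) U \<and> R `` {x} \<subseteq> U \<longrightarrow>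
      (\<exists>V. openin (top_of_set X) V \<and> x \<in> V \<and> (\<forall>x'\<in>V. R `` {x'} \<subseteq> U)))"

definition corr_us :: "'a::metric_space set \<Rightarrow> 'b::metric_space set \<Rightarrow> ('a \<times> 'b) set set" where
  "corr_us X Y = {R. correspondence X Y R \<and> usc X Y R \<and> usc Y X (converse R)}"

definition dGH_us :: "'a::metric_space set \<Rightarrow> 'b::metric_space set \<Rightarrow> ereal" where
  "dGH_us X Y = ereal (1/2) * (INF R\<in>corr_us X Y. dis R)"

end

theory Submission
  imports Defs
begin

definition relF :: "'a::metric_space set \<Rightarrow> 'a set \<Rightarrow> 'a set \<Rightarrow> real \<Rightarrow> ('a \<times> 'a) set" where
  "relF A B F e = {(a,b). a \<in> A \<and> b \<in> B \<and> (\<exists>c\<in>F. dist a c \<le> e \<and> dist b c \<le> e)}"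

lemma relF_conv: "converse (relF A B F e) = relF B A F e"
  unfolding relF_def by auto

lemma relF_usc:
  assumes "finite F"
  shows "usc A B (relF A B F e)"
  unfolding usc_def
proof (intro ballI allI impI)
  fix x U
  assume x: "x \<in> A" and U: "openin (top_of_set B) U \<and> relF A B F e `` {x} \<subseteq> U"
  define T where "T = (\<Union>c\<in>{c\<in>F. dist x c > e}. cball c e)"
  have cT: "closed T" unfolding T_def using assms by (intro closed_UN) auto
  have "openin (top_of_set A) (A - (A \<inter> T))"
    by (intro openin_diff closedin_closed_Int cT) auto
  moreover have "x \<in> A - (A \<inter> T)" using x unfolding T_def by (auto simp: dist_commute)
  moreover have "\<forall>x'\<in>A - (A \<inter> T). relF A B F e `` {x'} \<subseteq> U"
  proof (intro ballI subsetI)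
    fix x' y assume x': "x' \<in> A - (A \<inter> T)" and y: "y \<in> relF A B F e `` {x'}"
    then obtain c where c: "c \<in> F" "dist x' c \<le> e" "dist y c \<le> e" "y \<in> B"
      unfolding relF_def by auto
    have "dist x c \<le> e"
    proof (rule ccontr)
      assume "\<not> dist x c \<le> e"
      then have "x' \<in> T" using c unfolding T_def by (auto simp: dist_commute)
      then show False using x' by auto
    qed
    then have "y \<in> relF A B F e `` {x}" using c x unfolding relF_def by auto
    then show "y \<in> U" using U by auto
  qed
  ultimately show "\<exists>V. openin (top_of_set A) V \<and> x \<in> V \<and> (\<forall>x'\<in>V. relF A B F e `` {x'} \<subseteq> U)"
    by blast
qed

lemma relF_dis:
  assumes "e \<ge> 0"
  shows "dis (relF A B F e) \<le> ereal (4*e)"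
  unfolding dis_def
proof (intro SUP_least)
  fix p q assume p: "p \<in> relF A B F e" and q: "q \<in> relF A B F e"
  obtain c where c: "dist (fst p) c \<le> e" "dist (snd p) c \<le> e" using p unfolding relF_def by auto
  obtain d where d: "dist (fst q) d \<le> e" "dist (snd q) d \<le> e" using q unfolding relF_def by auto
  have "\<bar>dist (fst p) (fst q) - dist (snd p) (snd q)\<bar> \<le> 4*e"
  proof -
    have "dist (fst p) (snd p) \<le> 2*e" using c dist_triangle[of "fst p" "snd p" c]
      by (simp add: dist_commute)
    moreover have "dist (fst q) (snd q) \<le> 2*e" using d dist_triangle[of "fst q" "snd q" d]
      by (simp add: dist_commute)
    moreover have "dist (fst p) (fst q) \<le> dist (fst p) (snd p) + dist (snd p) (snd q) + dist (snd q) (fst q)"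
      by (metis add.commute add_mono_thms_linordered_semiring(3) dist_triangle order_trans)
    moreover have "dist (snd p) (snd q) \<le> dist (snd p) (fst p) + dist (fst p) (fst q) + dist (fst q) (snd q)"
      by (metis add.commute add_mono_thms_linordered_semiring(3) dist_triangle order_trans)
    ultimately show ?thesis by (simp add: dist_commute abs_le_iff)
  qed
  then show "ereal \<bar>dist (fst p) (fst q) - dist (snd p) (snd q)\<bar> \<le> ereal (4*e)" by simp
qed

theorem mainTheorem7:
  fixes X Y :: "'a::metric_space set"
  assumes "X \<noteq> {}" and "compact X" and "Y \<subseteq> X" and "X \<subseteq> closure Y"
  shows "dGH_us X Y = 0"
proof -
  have ex: "\<exists>R\<in>corr_us X Y. dis R \<le> ereal (4*e)" if e: "e > 0" for e
  proof -
    have "X \<subseteq> (\<Union>c\<in>Y. ball c e)"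
    proof
      fix x assume "x \<in> X"
      then have "x \<in> closure Y" using assms by auto
      then obtain y where "y \<in> Y" "dist x y < e" using closure_approachableD e by blast
      then show "x \<in> (\<Union>c\<in>Y. ball c e)" by (auto simp: dist_commute)
    qed
    then obtain F where F: "F \<subseteq> Y" "finite F" "X \<subseteq> (\<Union>c\<in>F. ball c e)"
      using compactE_image[OF assms(2), of Y "\<lambda>c. ball c e"] by auto
    let ?R = "relF X Y F e"
    have "correspondence X Y ?R"
      unfolding correspondence_def
    proof (intro conjI)
      show "?R \<subseteq> X \<times> Y" unfolding relF_def by auto
      show "fst ` ?R = X"
      proof
        show "fst ` ?R \<subseteq> X" unfolding relF_def by auto
        show "X \<subseteq> fst ` ?R"
        proof
          fix x assume x: "x \<in> X"
          then obtain c where c: "c \<in> F" "dist c x < e" using F by auto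
          then have "(x, c) \<in> ?R" using x F e unfolding relF_def
            by (auto simp: dist_commute intro!: bexI[of _ c])
          then show "x \<in> fst ` ?R" by force
        qed
      qed
      show "snd ` ?R = Y"
      proof
        show "snd ` ?R \<subseteq> Y" unfolding relF_def by auto
        show "Y \<subseteq> snd ` ?R"
        proof
          fix y assume y: "y \<in> Y"
          then obtain c where c: "c \<in> F" "dist c y < e" using F assms(3) by auto
          then have "(y, y) \<in> ?R" using y assms(3) unfolding relF_def
            by (auto simp: dist_commute intro!: bexI[of _ c])
          then show "y \<in> snd ` ?R" by force
        qed
      qed
    qed
    moreover have "usc X Y ?R" using relF_usc F by blast
    moreover have "usc Y X (converse ?R)" using relF_usc F by (simp add: relF_conv)
    ultimately have "?R \<in> corr_us X Y" unfolding corr_us_def by blast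
    moreover have "dis ?R \<le> ereal (4*e)" using relF_dis[of e] e by simp
    ultimately show ?thesis by blast
  qed
  have ge: "0 \<le> (INF R\<in>corr_us X Y. dis R)"
  proof (rule INF_greatest)
    fix R assume R: "R \<in> corr_us X Y"
    obtain x where "x \<in> X" using assms(1) by auto
    then obtain p where p: "p \<in> R" using R unfolding corr_us_def correspondence_def by force
    have "ereal \<bar>dist (fst p) (fst p) - dist (snd p) (snd p)\<bar> \<le> dis R"
      unfolding dis_def using p by (intro SUP_upper2[OF p] SUP_upper) auto
    then show "0 \<le> dis R" by (simp add: zero_ereal_def)
  qed
  have le: "(INF R\<in>corr_us X Y. dis R) \<le> 0"
  proof (rule ereal_le_epsilon2)
    fix e :: real assume e: "0 < e"
    obtain R where "R \<in> corr_us X Y" "dis R \<le> ereal (4*(e/4))" using ex[of "e/4"] e by auto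
    then have "(INF R\<in>corr_us X Y. dis R) \<le> ereal (4*(e/4))" by (meson INF_lower2)
    then show "(INF R\<in>corr_us X Y. dis R) \<le> 0 + ereal e" by simp
  qed
  show ?thesis unfolding dGH_us_def using ge le by (simp add: antisym)
qed

end
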